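(* In the social learning model, assume there exist $c>0$, $k>0$ and $x_0>0$ such that $G_-(-x)=c\,x^{-k}$ and $G_+(x)=1-c\,x^{-k}$ for all $x>x_0$. Then there exists $\kappa>0$ such that for all $t\ge1$, $$\mathbb{P}_+(a_t=-1)<\kappa\,t^{-2.1}.$$
   Context: Social learning model. A state $\theta\in\{-1,+1\}$ is drawn with $\mathbb{P}(\theta=+1)=\mathbb{P}(\theta=-1)=1/2$. Agents $t=1,2,\dots$ receive private signals $s_t\in\mathbb{R}$ that are i.i.d. conditionally on $\theta$, with CDF $F_+$ if $\theta=+1$ and $F_-$ if $\theta=-1$; $F_+$ and $F_-$ are mutually absolutely continuous. Let $L_t=\log\frac{\mathbb{P}(\theta=+1\mid s_t)}{\mathbb{P}(\theta=-1\mid s_t)}$ be the private log-likelihood ratio, and let $G_+$, $G_-$ denote the CDFs of $L_t$ conditional on $\theta=+1$, $\theta=-1$ respectively. Signals are assumed unbounded: for every $M\in\mathbb{R}$, $\mathbb{P}(L_t>M)>0$ and $\mathbb{P}(L_t<-M)>0$. Agent $t$ observes $a_1,\dots,a_{t-1}$ and her own signal and chooses $a_t\in\{-1,+1\}$ (utility $1$ if $a_t=\theta$, else $0$). The public belief is $\mu_t=\mathbb{P}(\theta=+1\mid a_1,\dots,a_{t-1})$ and $\ell_t=\log\frac{\mu_t}{1-\mu_t}$ (so $\ell_1=0$). In equilibrium $a_t=+1$ iff $\ell_t+L_t>0$, and otherwise $a_t=-1$. Consequently $\ell_{t+1}=\ell_t+D_+(\ell_t)$ if $a_t=+1$ and $\ell_{t+1}=\ell_t+D_-(\ell_t)$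 if $a_t=-1$, where $D_+(x)=\log\frac{1-G_+(-x)}{1-G_-(-x)}$ and $D_-(x)=\log\frac{G_+(-x)}{G_-(-x)}$. We write $\mathbb{P}_+(\cdot)=\mathbb{P}(\cdot\mid\theta=+1)$ and $\mathbb{E}_+$ for the corresponding expectation. *)

theory Defs
  imports "HOL-Probability.Probability"
begin

text \<open>Private log-likelihood ratio of a signal s. With the uniform prior on the state,
  log(P(theta=+1|s)/P(theta=-1|s)) = log (dF_+/dF_-)(s).\<close>
definition llr :: "real measure \<Rightarrow> real measure \<Rightarrow> real \<Rightarrow> real" where
  "llr Fp Fm s = ln (enn2real (RN_deriv Fm Fp s))"

definition llr_cdf :: "real measure \<Rightarrow> (real \<Rightarrow> real) \<Rightarrow> real \<Rightarrow> real" where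
  "llr_cdf F L x = measure F {s \<in> space F. L s \<le> x}"

definition Dplus :: "(real \<Rightarrow> real) \<Rightarrow> (real \<Rightarrow> real) \<Rightarrow> real \<Rightarrow> real" where
  "Dplus Gp Gm x = ln ((1 - Gp (- x)) / (1 - Gm (- x)))"

definition Dminus :: "(real \<Rightarrow> real) \<Rightarrow> (real \<Rightarrow> real) \<Rightarrow> real \<Rightarrow> real" where
  "Dminus Gp Gm x = ln (Gp (- x) / Gm (- x))"

text \<open>Public log-likelihood ratio: pub_ll ... w n is ell_{n+1}; agent n+1 receives the
  signal w n.\<close>
primrec pub_ll :: "(real \<Rightarrow> real) \<Rightarrow> (real \<Rightarrow> real) \<Rightarrow> (real \<Rightarrow> real) \<Rightarrow> (nat \<Rightarrow> real) \<Rightarrow> nat \<Rightarrow> real" where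
  "pub_ll L Gp Gm w 0 = 0"
| "pub_ll L Gp Gm w (Suc n) =
     (let x = pub_ll L Gp Gm w n in
      if x + L (w n) > 0 then x + Dplus Gp Gm x else x + Dminus Gp Gm x)"

text \<open>Action of agent t (t \<ge> 1), using signal w (t-1) and public llr ell_t.\<close>
definition action :: "(real \<Rightarrow> real) \<Rightarrow> (real \<Rightarrow> real) \<Rightarrow> (real \<Rightarrow> real) \<Rightarrow> (nat \<Rightarrow> real) \<Rightarrow> nat \<Rightarrow> int" where
  "action L Gp Gm w t =
     (if pub_ll L Gp Gm w (t - 1) + L (w (t - 1)) > 0 then 1 else -1)"

end

theory Submission
  imports Defs "HOL-Real_Asymp.Real_Asymp"
begin


locale SL =
  fixes Fp Fm :: "real measure"
  assumes pFp: "prob_space Fp" and pFm: "prob_space Fm"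
    and sFp: "sets Fp = sets borel" and sFm: "sets Fm = sets borel"
    and acpm: "absolutely_continuous Fp Fm" and acmp: "absolutely_continuous Fm Fp"
begin

abbreviation "L \<equiv> llr Fp Fm"

lemma L_meas_m[measurable]: "L \<in> borel_measurable Fm"
  unfolding llr_def by measurable

lemma L_meas_p[measurable]: "L \<in> borel_measurable Fp"
proof -
  have "borel_measurable Fm = borel_measurable Fp" by (rule measurable_cong_sets) (simp_all add: sFp sFm)
  then show ?thesis using L_meas_m by metis
qed

lemma dens: "density Fm (RN_deriv Fm Fp) = Fp"
proof -
  interpret prob_space Fm by (rule pFm)
  show ?thesis using acmp sFp sFm by (intro density_RN_deriv) auto
qed

lemma AE_fin: "AE x in Fm. RN_deriv Fm Fp x \<noteq> \<infinity>"
proof -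
  interpret prob_space Fm by (rule pFm)
  interpret p: prob_space Fp by (rule pFp)
  show ?thesis using acmp sFp sFm by (intro RN_deriv_finite) (auto intro: p.sigma_finite_measure_axioms)
qed

lemma AE_pos: "AE x in Fm. RN_deriv Fm Fp x \<noteq> 0"
proof -
  let ?Z = "{x \<in> space Fm. RN_deriv Fm Fp x = 0}"
  have Zs: "?Z \<in> sets Fm" by measurable
  have "emeasure Fp ?Z = emeasure (density Fm (RN_deriv Fm Fp)) ?Z" by (simp add: dens)
  also have "\<dots> = (\<integral>\<^sup>+ x. RN_deriv Fm Fp x * indicator ?Z x \<partial>Fm)"
    using Zs by (simp add: emeasure_density)
  also have "\<dots> = (\<integral>\<^sup>+ x. 0 \<partial>Fm)"
    by (intro nn_integral_cong) (auto simp: indicator_def)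
  finally have "emeasure Fp ?Z = 0" by simp
  moreover have "?Z \<in> sets Fp" using Zs sFp sFm by simp
  ultimately have "?Z \<in> null_sets Fp" by auto
  with acpm have "?Z \<in> null_sets Fm" unfolding absolutely_continuous_def by auto
  then show ?thesis by (intro AE_I[OF _ _ Zs]) auto
qed

lemma densL: "Fp = density Fm (\<lambda>s. ennreal (exp (L s)))"
proof -
  have "density Fm (RN_deriv Fm Fp) = density Fm (\<lambda>s. ennreal (exp (L s)))"
  proof (rule density_cong)
    show "AE x in Fm. RN_deriv Fm Fp x = ennreal (exp (L x))"
      using AE_fin AE_pos
    proof eventually_elim
      case (elim x)
      then have "enn2real (RN_deriv Fm Fp x) > 0"
        by (simp add: enn2real_positive_iff less_top zero_less_iff_neq_zero)
      then show ?case using elim by (simp add: llr_def ennreal_enn2real_if)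
    qed
  qed auto
  then show ?thesis using dens by simp
qed

lemma spFp[simp]: "space Fp = UNIV" using sFp by (metis sets_eq_imp_space_eq space_borel)
lemma spFm[simp]: "space Fm = UNIV" using sFm by (metis sets_eq_imp_space_eq space_borel)

lemma Ls[measurable]: "{s. P (L s)} \<in> sets borel" if "Measurable.pred borel P" for P
proof -
  have "{s \<in> space Fm. P (L s)} \<in> sets Fm" using that by measurable
  then show ?thesis using sFm by simp
qed

lemma eFp: "emeasure Fp S = (\<integral>\<^sup>+ s. ennreal (exp (L s)) * indicator S s \<partial>Fm)" if "S \<in> sets borel" for S
proof -
  have "emeasure Fp S = emeasure (density Fm (\<lambda>s. ennreal (exp (L s)))) S"
    by (rule arg_cong[where f="\<lambda>M. emeasure M S", OF densL])
  also have "\<dots> = (\<integral>\<^sup>+ s. ennreal (exp (L s)) * indicator S s \<partial>Fm)"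
    using that sFm by (intro emeasure_density) auto
  finally show ?thesis .
qed

lemma lowerb: "exp a * measure Fm S \<le> measure Fp S"
  if S: "S \<in> sets borel" and h: "\<And>s. s \<in> S \<Longrightarrow> a \<le> L s" for S a
proof -
  interpret m: prob_space Fm by (rule pFm)
  interpret p: prob_space Fp by (rule pFp)
  have "ennreal (exp a) * emeasure Fm S = (\<integral>\<^sup>+ s. ennreal (exp a) * indicator S s \<partial>Fm)"
    using S sFm by (simp add: nn_integral_cmult_indicator)
  also have "\<dots> \<le> (\<integral>\<^sup>+ s. ennreal (exp (L s)) * indicator S s \<partial>Fm)"
    by (intro nn_integral_mono) (auto simp: indicator_def h)
  also have "\<dots> = emeasure Fp S" using eFp[OF S] by simp
  finally have "ennreal (exp a) * ennreal (measure Fm S) \<le> ennreal (measure Fp S)"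
    by (simp only: m.emeasure_eq_measure p.emeasure_eq_measure)
  then have "ennreal (exp a * measure Fm S) \<le> ennreal (measure Fp S)"
    by (subst ennreal_mult) auto
  then show ?thesis by (subst (asm) ennreal_le_iff) auto
qed

lemma upperb: "measure Fp S \<le> exp b * measure Fm S"
  if S: "S \<in> sets borel" and h: "\<And>s. s \<in> S \<Longrightarrow> L s \<le> b" for S b
proof -
  interpret m: prob_space Fm by (rule pFm)
  interpret p: prob_space Fp by (rule pFp)
  have "emeasure Fp S = (\<integral>\<^sup>+ s. ennreal (exp (L s)) * indicator S s \<partial>Fm)" using eFp[OF S] by simp
  also have "\<dots> \<le> (\<integral>\<^sup>+ s. ennreal (exp b) * indicator S s \<partial>Fm)"
    by (intro nn_integral_mono) (auto simp: indicator_def h)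
  also have "\<dots> = ennreal (exp b) * emeasure Fm S"
    using S sFm by (simp add: nn_integral_cmult_indicator)
  finally have "ennreal (measure Fp S) \<le> ennreal (exp b) * ennreal (measure Fm S)"
    by (simp only: m.emeasure_eq_measure p.emeasure_eq_measure)
  then have "ennreal (measure Fp S) \<le> ennreal (exp b * measure Fm S)"
    by (subst ennreal_mult) auto
  then show ?thesis by (subst (asm) ennreal_le_iff) auto
qed

end


fun lh :: "(real\<Rightarrow>real) \<Rightarrow> (real\<Rightarrow>real) \<Rightarrow> bool list \<Rightarrow> real" where
  "lh Gp Gm [] = 0"
| "lh Gp Gm (b#h) = (let x = lh Gp Gm h in if b then x + Dplus Gp Gm x else x + Dminus Gp Gm x)"

fun pr :: "(real\<Rightarrow>real) \<Rightarrow> (real\<Rightarrow>real) \<Rightarrow> (real\<Rightarrow>real) \<Rightarrow> bool list \<Rightarrow> real" where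
  "pr G Gp Gm [] = 1"
| "pr G Gp Gm (b#h) = pr G Gp Gm h * (if b then 1 - G (- lh Gp Gm h) else G (- lh Gp Gm h))"

definition HL :: "nat \<Rightarrow> bool list set" where "HL n = {h. length h = n}"

lemma finite_HL[simp]: "finite (HL n)"
  unfolding HL_def using finite_lists_length_eq[of "UNIV::bool set" n] by simp

lemma HL_Suc: "HL (Suc n) = (\<lambda>h. True#h) ` HL n \<union> (\<lambda>h. False#h) ` HL n"
proof (rule set_eqI)
  fix h :: "bool list"
  show "h \<in> HL (Suc n) \<longleftrightarrow> h \<in> (\<lambda>h. True#h) ` HL n \<union> (\<lambda>h. False#h) ` HL n"
  proof (cases h)
    case (Cons b t)
    then show ?thesis by (cases b) (auto simp: HL_def)
  qed (auto simp: HL_def)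
qed

lemma sum_HL_Suc: "(\<Sum>h\<in>HL (Suc n). f h) = (\<Sum>h\<in>HL n. f (True#h) + f (False#h))"
proof -
  have "(\<Sum>h\<in>HL (Suc n). f h) = (\<Sum>h\<in>(\<lambda>h. True#h) ` HL n. f h) + (\<Sum>h\<in>(\<lambda>h. False#h) ` HL n. f h)"
    unfolding HL_Suc by (rule sum.union_disjoint) auto
  also have "\<dots> = (\<Sum>h\<in>HL n. f (True#h)) + (\<Sum>h\<in>HL n. f (False#h))"
    by (subst sum.reindex; simp add: inj_on_def)+
  finally show ?thesis by (simp add: sum.distrib)
qed

lemma sum_pr: "(\<Sum>h\<in>HL n. pr G Gp Gm h) = 1"
proof (induction n)
  case 0
  have "HL 0 = {[]}" unfolding HL_def by auto
  then show ?case by simp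
next
  case (Suc n)
  then show ?case unfolding sum_HL_Suc by (simp add: algebra_simps sum.distrib[symmetric])
qed

locale comb =
  fixes Gp Gm :: "real \<Rightarrow> real"
  assumes pos: "\<And>x. 0 < Gp x \<and> Gp x < 1 \<and> 0 < Gm x \<and> Gm x < 1"
    and opt: "\<And>l t. exp l * Gp (-l) - Gm (-l) \<le> exp l * Gp t - Gm t"
begin

abbreviation "pp \<equiv> pr Gp Gp Gm"
abbreviation "pm \<equiv> pr Gm Gp Gm"
abbreviation "ll \<equiv> lh Gp Gm"

lemma pr_nonneg: "G = Gp \<or> G = Gm \<Longrightarrow> 0 \<le> pr G Gp Gm h"
proof (induction h)
  case (Cons b h)
  then show ?case using pos[of "- ll h"] by auto
qed simp

lemma ratio: "pp h = exp (ll h) * pm h"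
proof (induction h)
  case (Cons b h)
  define x where "x = ll h"
  have p: "0 < Gp (-x)" "Gp (-x) < 1" "0 < Gm (-x)" "Gm (-x) < 1" using pos[of "-x"] by auto
  show ?case
  proof (cases b)
    case True
    have e: "exp (x + Dplus Gp Gm x) = exp x * ((1 - Gp (-x)) / (1 - Gm (-x)))"
      unfolding Dplus_def using p by (simp add: exp_add)
    have "exp (ll (b#h)) * pm (b#h) = exp x * ((1 - Gp (-x)) / (1 - Gm (-x))) * (pm h * (1 - Gm (-x)))"
      using True e by (simp add: x_def Let_def)
    also have "\<dots> = exp x * pm h * (1 - Gp (-x))" using p by (simp add: field_simps)
    also have "\<dots> = pp (b#h)" using Cons.IH True by (simp add: x_def Let_def)
    finally show ?thesis by simp
  next
    case False
    have e: "exp (x + Dminus Gp Gm x) = exp x * (Gp (-x) / Gm (-x))"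
      unfolding Dminus_def using p by (simp add: exp_add)
    have "exp (ll (b#h)) * pm (b#h) = exp x * (Gp (-x) / Gm (-x)) * (pm h * Gm (-x))"
      using False e by (simp add: x_def Let_def)
    also have "\<dots> = exp x * pm h * Gp (-x)" using p by (simp add: field_simps)
    also have "\<dots> = pp (b#h)" using Cons.IH False by (simp add: x_def Let_def)
    finally show ?thesis by simp
  qed
qed simp

definition err :: "nat \<Rightarrow> real" where
  "err n = (\<Sum>h\<in>HL n. (if hd h then 0 else pp h) + (if hd h then pm h else 0)) / 2"

lemma step_opt: "pp h * Gp (- ll h) + pm h * (1 - Gm (- ll h)) \<le> pp h * Gp t + pm h * (1 - Gm t)"
proof -
  have "pm h * (exp (ll h) * Gp (- ll h) - Gm (- ll h)) \<le> pm h * (exp (ll h) * Gp t - Gm t)"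
    using opt pr_nonneg[of Gm] by (intro mult_left_mono) auto
  then show ?thesis unfolding ratio by (simp add: algebra_simps)
qed

lemma err_step:
  assumes "n \<ge> 1"
  shows "err (Suc n) \<le> max (Gp (-M)) (1 - Gm M) + max (1 - Gm (-M)) (Gp M) * err n"
proof -
  define e where "e = max (Gp (-M)) (1 - Gm M)"
  define r where "r = max (1 - Gm (-M)) (Gp M)"
  have r0: "0 \<le> r" unfolding r_def using pos[of M] by auto
  have e0: "0 \<le> e" unfolding e_def using pos[of "-M"] by auto
  have tm: "pp h * Gp (- ll h) + pm h * (1 - Gm (- ll h)) \<le>
      e * (pp h + pm h) + r * ((if hd h then 0 else pp h) + (if hd h then pm h else 0))" for h
  proof (cases "hd h")
    case True
    have "pp h * Gp (- ll h) + pm h * (1 - Gm (- ll h)) \<le> pp h * Gp (-M) + pm h * (1 - Gm (-M))"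
      by (rule step_opt)
    also have "\<dots> \<le> pp h * e + pm h * r"
      using pr_nonneg[of Gp h] pr_nonneg[of Gm h] unfolding e_def r_def
      by (intro add_mono mult_left_mono) auto
    also have "\<dots> \<le> e * (pp h + pm h) + r * pm h"
      using mult_nonneg_nonneg[OF pr_nonneg[of Gm h] e0] by (simp add: algebra_simps)
    finally show ?thesis using True by simp
  next
    case False
    have "pp h * Gp (- ll h) + pm h * (1 - Gm (- ll h)) \<le> pp h * Gp M + pm h * (1 - Gm M)"
      by (rule step_opt)
    also have "\<dots> \<le> pp h * r + pm h * e"
      using pr_nonneg[of Gp h] pr_nonneg[of Gm h] unfolding e_def r_def
      by (intro add_mono mult_left_mono) auto
    also have "\<dots> \<le> e * (pp h + pm h) + r * pp h"
      using mult_nonneg_nonneg[OF pr_nonneg[of Gp h] e0] by (simp add: algebra_simps)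
    finally show ?thesis using False by simp
  qed
  have "2 * err (Suc n) = (\<Sum>h\<in>HL n. pp h * Gp (- ll h) + pm h * (1 - Gm (- ll h)))"
    unfolding err_def sum_HL_Suc by (simp add: Let_def add.commute)
  also have "\<dots> \<le> (\<Sum>h\<in>HL n. e * (pp h + pm h) + r * ((if hd h then 0 else pp h) + (if hd h then pm h else 0)))"
    by (intro sum_mono tm)
  also have "\<dots> = e * 2 + r * (2 * err n)"
    unfolding err_def by (simp add: sum.distrib sum_distrib_left[symmetric] sum_pr)
  finally show ?thesis unfolding e_def r_def by simp
qed

lemma err_bounds: "0 \<le> err n" "err n \<le> 1"
proof -
  have "0 \<le> (\<Sum>h\<in>HL n. (if hd h then 0 else pp h) + (if hd h then pm h else 0))"
    using pr_nonneg by (intro sum_nonneg) auto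
  then show "0 \<le> err n" unfolding err_def by simp
  have "(\<Sum>h\<in>HL n. (if hd h then 0 else pp h) + (if hd h then pm h else 0)) \<le> (\<Sum>h\<in>HL n. pp h + pm h)"
    using pr_nonneg by (intro sum_mono) auto
  also have "\<dots> = 2" by (simp add: sum.distrib sum_pr)
  finally show "err n \<le> 1" unfolding err_def by simp
qed

lemma wrong_le_err: "(\<Sum>h\<in>HL n. if hd h then 0 else pp h) \<le> 2 * err n"
proof -
  have "(\<Sum>h\<in>HL n. if hd h then 0 else pp h) \<le> (\<Sum>h\<in>HL n. (if hd h then 0 else pp h) + (if hd h then pm h else 0))"
    using pr_nonneg by (intro sum_mono) auto
  then show ?thesis unfolding err_def by simp
qed

end


locale SL2 = SL +
  fixes c k x0 :: real
  assumes unbounded: "\<forall>M::real.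
       (measure Fp {s \<in> space Fp. L s > M} + measure Fm {s \<in> space Fm. L s > M}) / 2 > 0 \<and>
       (measure Fp {s \<in> space Fp. L s < - M} + measure Fm {s \<in> space Fm. L s < - M}) / 2 > 0"
    and cpos: "c > 0" and kpos: "k > 0" and x0pos: "x0 > 0"
    and tails: "\<forall>x > x0. llr_cdf Fm L (- x) = c * x powr (- k) \<and> llr_cdf Fp L x = 1 - c * x powr (- k)"
begin

abbreviation "Gp \<equiv> llr_cdf Fp L"
abbreviation "Gm \<equiv> llr_cdf Fm L"

lemma Gp_eq: "Gp x = measure Fp {s. L s \<le> x}" unfolding llr_cdf_def by simp
lemma Gm_eq: "Gm x = measure Fm {s. L s \<le> x}" unfolding llr_cdf_def by simp

lemma split_p: "a \<le> b \<Longrightarrow> measure Fp {s. L s \<le> b} = measure Fp {s. L s \<le> a} + measure Fp {s. a < L s \<and> L s \<le> b}"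
proof -
  assume ab: "a \<le> b"
  interpret p: prob_space Fp by (rule pFp)
  have "{s. L s \<le> b} = {s. L s \<le> a} \<union> {s. a < L s \<and> L s \<le> b}" using ab by auto
  then show ?thesis by (simp add: p.finite_measure_Union sFp disjoint_iff)
qed

lemma split_m: "a \<le> b \<Longrightarrow> measure Fm {s. L s \<le> b} = measure Fm {s. L s \<le> a} + measure Fm {s. a < L s \<and> L s \<le> b}"
proof -
  assume ab: "a \<le> b"
  interpret p: prob_space Fm by (rule pFm)
  have "{s. L s \<le> b} = {s. L s \<le> a} \<union> {s. a < L s \<and> L s \<le> b}" using ab by auto
  then show ?thesis by (simp add: p.finite_measure_Union sFm disjoint_iff)
qed

lemma opt: "exp l * Gp (-l) - Gm (-l) \<le> exp l * Gp t - Gm t"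
proof (cases "-l \<le> t")
  case True
  let ?S = "{s. -l < L s \<and> L s \<le> t}"
  have "exp (-l) * measure Fm ?S \<le> measure Fp ?S" by (rule lowerb) auto
  then have "measure Fm ?S \<le> exp l * measure Fp ?S"
    by (simp add: exp_minus field_simps)
  then show ?thesis using split_p[OF True] split_m[OF True] unfolding Gp_eq Gm_eq
    by (simp add: algebra_simps)
next
  case False
  then have F: "t \<le> -l" by simp
  let ?S = "{s. t < L s \<and> L s \<le> -l}"
  have "measure Fp ?S \<le> exp (-l) * measure Fm ?S" by (rule upperb) auto
  then have "exp l * measure Fp ?S \<le> measure Fm ?S"
    by (simp add: exp_minus field_simps)
  then show ?thesis using split_p[OF F] split_m[OF F] unfolding Gp_eq Gm_eq
    by (simp add: algebra_simps)
qed

lemma Gp_small: "Gp (-M) \<le> exp (-M)"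
proof -
  interpret m: prob_space Fm by (rule pFm)
  have "measure Fp {s. L s \<le> -M} \<le> exp (-M) * measure Fm {s. L s \<le> -M}" by (rule upperb) auto
  also have "\<dots> \<le> exp (-M) * 1" by (intro mult_left_mono) auto
  finally show ?thesis unfolding Gp_eq by simp
qed

lemma Gm_small: "1 - Gm M \<le> exp (-M)"
proof -
  interpret m: prob_space Fm by (rule pFm)
  interpret p: prob_space Fp by (rule pFp)
  have c: "1 - Gm M = measure Fm {s. M < L s}"
    using m.prob_compl[of "{s. L s \<le> M}"] sFm unfolding Gm_eq
    by (simp add: Compl_eq_Diff_UNIV[symmetric] not_le Collect_neg_eq[symmetric])
  have "exp M * measure Fm {s. M < L s} \<le> measure Fp {s. M < L s}" by (rule lowerb) auto
  also have "\<dots> \<le> 1" by simp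
  finally have "measure Fm {s. M < L s} \<le> exp (-M)" by (simp add: exp_minus field_simps)
  then show ?thesis using c by simp
qed

lemma null_eq: "S \<in> sets borel \<Longrightarrow> measure Fp S = 0 \<longleftrightarrow> measure Fm S = 0"
proof -
  assume S: "S \<in> sets borel"
  interpret m: prob_space Fm by (rule pFm)
  interpret p: prob_space Fp by (rule pFp)
  have "measure Fp S = 0 \<longleftrightarrow> S \<in> null_sets Fp" using S sFp measure_nonneg[of Fp S]
    by (auto simp: null_sets_def p.emeasure_eq_measure ennreal_eq_0_iff measure_le_0_iff)
  also have "\<dots> \<longleftrightarrow> S \<in> null_sets Fm" using acmp acpm unfolding absolutely_continuous_def by auto
  also have "\<dots> \<longleftrightarrow> measure Fm S = 0" using S sFm measure_nonneg[of Fm S]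
    by (auto simp: null_sets_def m.emeasure_eq_measure ennreal_eq_0_iff measure_le_0_iff)
  finally show ?thesis .
qed

lemma both_pos: "S \<in> sets borel \<Longrightarrow> (measure Fp S + measure Fm S) / 2 > 0 \<Longrightarrow> measure Fp S > 0 \<and> measure Fm S > 0"
proof -
  assume S: "S \<in> sets borel" and h: "(measure Fp S + measure Fm S) / 2 > 0"
  have "measure Fp S \<ge> 0" "measure Fm S \<ge> 0" by auto
  then show ?thesis using null_eq[OF S] h by (cases "measure Fp S = 0") (auto simp: order_less_le)
qed

lemma pos: "0 < Gp x \<and> Gp x < 1 \<and> 0 < Gm x \<and> Gm x < 1"
proof -
  interpret m: prob_space Fm by (rule pFm)
  interpret p: prob_space Fp by (rule pFp)
  have u1: "measure Fp {s. L s > x} > 0 \<and> measure Fm {s. L s > x} > 0"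
    using unbounded by (intro both_pos) auto
  have u2: "measure Fp {s. L s < x} > 0 \<and> measure Fm {s. L s < x} > 0"
    using unbounded[rule_format, of "-x"] by (intro both_pos) auto
  have "measure Fp {s. L s < x} \<le> measure Fp {s. L s \<le> x}"
    using sFp by (intro p.finite_measure_mono) auto
  moreover have "measure Fm {s. L s < x} \<le> measure Fm {s. L s \<le> x}"
    using sFm by (intro m.finite_measure_mono) auto
  moreover have "Gp x = 1 - measure Fp {s. L s > x}"
    using p.prob_compl[of "{s. x < L s}"] sFp unfolding Gp_eq
    by (simp add: Compl_eq_Diff_UNIV[symmetric] not_less Collect_neg_eq[symmetric])
  moreover have "Gm x = 1 - measure Fm {s. L s > x}"
    using m.prob_compl[of "{s. x < L s}"] sFm unfolding Gm_eq
    by (simp add: Compl_eq_Diff_UNIV[symmetric] not_less Collect_neg_eq[symmetric])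
  ultimately show ?thesis using u1 u2 unfolding Gp_eq Gm_eq by linarith
qed

sublocale comb Gp Gm
  by unfold_locales (rule pos, rule opt)

lemma err_rec: "n \<ge> 1 \<Longrightarrow> M > x0 \<Longrightarrow> err (Suc n) \<le> exp (-M) + (1 - c * M powr (-k)) * err n"
proof -
  assume n: "n \<ge> 1" and M: "M > x0"
  have "max (Gp (-M)) (1 - Gm M) \<le> exp (-M)" using Gp_small Gm_small by simp
  moreover have "max (1 - Gm (-M)) (Gp M) = 1 - c * M powr (-k)" using tails M by simp
  then have "err (Suc n) \<le> max (Gp (-M)) (1 - Gm M) + (1 - c * M powr (-k)) * err n"
    using err_step[OF n, of M] by simp
  ultimately show ?thesis by linarith
qed

end


fun hist :: "(real\<Rightarrow>real) \<Rightarrow> (real\<Rightarrow>real) \<Rightarrow> (real\<Rightarrow>real) \<Rightarrow> (nat\<Rightarrow>real) \<Rightarrow> nat \<Rightarrow> bool list" where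
  "hist L Gp Gm w 0 = []"
| "hist L Gp Gm w (Suc n) = (lh Gp Gm (hist L Gp Gm w n) + L (w n) > 0) # hist L Gp Gm w n"

lemma len_hist[simp]: "length (hist L Gp Gm w n) = n"
  by (induction n) auto

lemma pub_hist: "pub_ll L Gp Gm w n = lh Gp Gm (hist L Gp Gm w n)"
  by (induction n) (auto simp: Let_def)

lemma hist_cong: "(\<And>i. i < n \<Longrightarrow> w i = w' i) \<Longrightarrow> hist L Gp Gm w n = hist L Gp Gm w' n"
  by (induction n) auto

locale PM =
  fixes F :: "real measure" and L Gp Gm :: "real \<Rightarrow> real"
  assumes pF: "prob_space F" and sF: "sets F = sets borel" and Lm: "L \<in> borel_measurable borel"
    and Gp: "\<And>x. Gp x = measure F {s. L s \<le> x}"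
begin

lemma spF[simp]: "space F = UNIV" using sF by (metis sets_eq_imp_space_eq space_borel)

lemma spP[simp]: "space (PiM I (\<lambda>_. F)) = (UNIV :: (nat \<Rightarrow> real) set)" if "I = UNIV"
  using that by (simp add: space_PiM)

lemma setF: "{s. P (L s)} \<in> sets F" if "Measurable.pred borel P" for P
proof -
  have "{s \<in> space borel. P (L s)} \<in> sets borel" using that Lm by measurable
  then show ?thesis using sF by simp
qed

lemma step_set: "n \<in> I \<Longrightarrow> {w \<in> space (PiM I (\<lambda>_. F)). (x + L (w n) > 0) = b} \<in> sets (PiM I (\<lambda>_. F))"
proof -
  assume n: "n \<in> I"
  have m: "(\<lambda>w. w n) \<in> measurable (PiM I (\<lambda>_. F)) F" using n by (rule measurable_component_singleton)
  have "{s. (x + L s > 0) = b} \<in> sets F" by (rule setF) measurable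
  from measurable_sets[OF m this] show ?thesis by (simp add: vimage_def Int_def conj_commute)
qed

lemma hist_sets: "{..<n} \<subseteq> I \<Longrightarrow> {w \<in> space (PiM I (\<lambda>_. F)). hist L Gp Gm w n = h} \<in> sets (PiM I (\<lambda>_. F))"
proof (induction n arbitrary: h)
  case 0
  show ?case by (cases "h = []") auto
next
  case (Suc n)
  show ?case
  proof (cases h)
    case Nil then show ?thesis by simp
  next
    case (Cons b h')
    have "{w \<in> space (PiM I (\<lambda>_. F)). hist L Gp Gm w (Suc n) = h} =
      {w \<in> space (PiM I (\<lambda>_. F)). hist L Gp Gm w n = h'} \<inter> {w \<in> space (PiM I (\<lambda>_. F)). (lh Gp Gm h' + L (w n) > 0) = b}"
      using Cons by auto
    moreover have "{w \<in> space (PiM I (\<lambda>_. F)). hist L Gp Gm w n = h'} \<in> sets (PiM I (\<lambda>_. F))"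
      by (rule Suc.IH) (use Suc.prems in auto)
    moreover have "{w \<in> space (PiM I (\<lambda>_. F)). (lh Gp Gm h' + L (w n) > 0) = b} \<in> sets (PiM I (\<lambda>_. F))"
      using Suc.prems by (intro step_set) auto
    ultimately show ?thesis by simp
  qed
qed

abbreviation "P \<equiv> PiM (UNIV::nat set) (\<lambda>_. F)"

lemma pP: "prob_space P"
  using pF by (intro prob_space_PiM) auto

lemma indep: "prob_space.indep_vars P (\<lambda>_. F) (\<lambda>i w. w i) UNIV"
proof -
  interpret p: prob_space P by (rule pP)
  have "p.indep_vars (\<lambda>_. F) (\<lambda>i w. w i) UNIV \<longleftrightarrow>
    distr P (PiM UNIV (\<lambda>_. F)) (\<lambda>x. \<lambda>i\<in>UNIV. x i) = PiM UNIV (\<lambda>i. distr P F (\<lambda>w. w i))"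
    by (rule p.indep_vars_iff_distr_eq_PiM) (auto intro: measurable_component_singleton)
  moreover have "distr P (PiM UNIV (\<lambda>_. F)) (\<lambda>x. \<lambda>i\<in>UNIV. x i) = P"
    by (simp add: restrict_UNIV)
  moreover have "PiM UNIV (\<lambda>i. distr P F (\<lambda>w. w i)) = P"
    using pF by (intro PiM_cong refl distr_PiM_component) auto
  ultimately show ?thesis by simp
qed

lemma step_prob: "measure P {w. (x + L (w n) > 0) = b} = (if b then 1 - Gp (-x) else Gp (-x))"
proof -
  interpret f: prob_space F by (rule pF)
  have m: "(\<lambda>w. w n) \<in> measurable P F" by (rule measurable_component_singleton) auto
  have S: "{s. (x + L s > 0) = b} \<in> sets F" by (rule setF) measurable
  have "measure P {w. (x + L (w n) > 0) = b} = measure (distr P F (\<lambda>w. w n)) {s. (x + L s > 0) = b}"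
    using measure_distr[OF m S] by (simp add: vimage_def)
  also have "\<dots> = measure F {s. (x + L s > 0) = b}"
    using pF by (subst distr_PiM_component) auto
  also have "\<dots> = (if b then 1 - Gp (-x) else Gp (-x))"
  proof (cases b)
    case True
    have "{s. (x + L s > 0) = b} = space F - {s. L s \<le> -x}" using True by auto
    then show ?thesis using True f.prob_compl[of "{s. L s \<le> -x}"] setF[of "\<lambda>y. y \<le> -x"] Gp[of "-x"] by simp
  next
    case False
    have "{s. (x + L s > 0) = b} = {s. L s \<le> -x}" using False by auto
    then show ?thesis using False Gp[of "-x"] by simp
  qed
  finally show ?thesis .
qed

lemma hist_prob: "length h = n \<Longrightarrow> measure P {w. hist L Gp Gm w n = h} = pr Gp Gp Gm h"
proof (induction n arbitrary: h)
  case 0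
  interpret p: prob_space P by (rule pP)
  show ?case using 0 by (simp add: p.prob_space[unfolded spP[OF refl]])
next
  case (Suc n)
  interpret p: prob_space P by (rule pP)
  obtain b h' where h: "h = b # h'" and lh': "length h' = n" using Suc.prems by (cases h) auto
  have iv: "p.indep_var (PiM {..<n} (\<lambda>_. F)) (\<lambda>w. restrict (\<lambda>i. w i) {..<n}) (PiM {n} (\<lambda>_. F)) (\<lambda>w. restrict (\<lambda>i. w i) {n})"
    by (rule p.indep_var_restrict[OF indep]) auto
  let ?Xa = "{f \<in> space (PiM {..<n} (\<lambda>_. F)). hist L Gp Gm f n = h'}"
  let ?Xb = "{g \<in> space (PiM {n} (\<lambda>_. F)). (lh Gp Gm h' + L (g n) > 0) = b}"
  have Xa: "?Xa \<in> sets (PiM {..<n} (\<lambda>_. F))" by (rule hist_sets) auto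
  have Xb: "?Xb \<in> sets (PiM {n} (\<lambda>_. F))" by (rule step_set) auto
  have hr: "hist L Gp Gm (restrict w {..<n}) n = hist L Gp Gm w n" for w
    by (rule hist_cong) auto
  have e1: "(\<lambda>x. (restrict (\<lambda>i. x i) {..<n}, restrict (\<lambda>i. x i) {n})) -` (?Xa \<times> ?Xb) \<inter> space P
      = {w. hist L Gp Gm w (Suc n) = h}"
    using h by (auto simp: hr space_PiM)
  have e2: "(\<lambda>w. restrict (\<lambda>i. w i) {..<n}) -` ?Xa \<inter> space P = {w. hist L Gp Gm w n = h'}"
    by (auto simp: hr space_PiM)
  have e3: "(\<lambda>w. restrict (\<lambda>i. w i) {n}) -` ?Xb \<inter> space P = {w. (lh Gp Gm h' + L (w n) > 0) = b}"
    by (auto simp: space_PiM)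
  have "measure P {w. hist L Gp Gm w (Suc n) = h} = measure P {w. hist L Gp Gm w n = h'} * measure P {w. (lh Gp Gm h' + L (w n) > 0) = b}"
    using p.indep_varD[OF iv Xa Xb] unfolding e1 e2 e3 .
  also have "\<dots> = pr Gp Gp Gm h' * (if b then 1 - Gp (- lh Gp Gm h') else Gp (- lh Gp Gm h'))"
    using Suc.IH[OF lh'] step_prob by simp
  finally show ?case using h by simp
qed

lemma wrong_prob: "t \<ge> 1 \<Longrightarrow> measure P {w. \<not> hd (hist L Gp Gm w t)} = (\<Sum>h\<in>HL t. if hd h then 0 else pr Gp Gp Gm h)"
proof -
  assume t: "t \<ge> 1"
  interpret p: prob_space P by (rule pP)
  let ?A = "\<lambda>h. {w. hist L Gp Gm w t = h}"
  have "{w. \<not> hd (hist L Gp Gm w t)} = (\<Union>h\<in>{h \<in> HL t. \<not> hd h}. ?A h)"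
    by (auto simp: HL_def)
  then have "measure P {w. \<not> hd (hist L Gp Gm w t)} = (\<Sum>h\<in>{h \<in> HL t. \<not> hd h}. measure P (?A h))"
  proof (simp only:)
    show "measure P (\<Union>h\<in>{h \<in> HL t. \<not> hd h}. ?A h) = (\<Sum>h\<in>{h \<in> HL t. \<not> hd h}. measure P (?A h))"
    proof (rule p.finite_measure_finite_Union)
      show "finite {h \<in> HL t. \<not> hd h}" by simp
      show "?A ` {h \<in> HL t. \<not> hd h} \<subseteq> p.events"
        using hist_sets[of t UNIV] by auto
      show "disjoint_family_on ?A {h \<in> HL t. \<not> hd h}"
        by (auto simp: disjoint_family_on_def)
    qed
  qed
  also have "\<dots> = (\<Sum>h\<in>{h \<in> HL t. \<not> hd h}. pr Gp Gp Gm h)"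
    by (intro sum.cong refl hist_prob) (auto simp: HL_def)
  also have "\<dots> = (\<Sum>h\<in>HL t. if hd h then 0 else pr Gp Gp Gm h)"
  proof -
    have "{h \<in> HL t. \<not> hd h} = HL t \<inter> - Collect hd" by auto
    then show ?thesis by (simp add: sum.If_cases)
  qed
  finally show ?thesis .
qed

end


lemma ev_real: fixes c k x0 :: real assumes "c > 0" "k > 0"
  shows "eventually (\<lambda>x::real. exp(-3*ln(x+1)) + (1 - c*(3*ln(x+1)) powr (-k)) * x powr (-21/10) \<le> (x+1) powr (-21/10)
     \<and> 3*ln(x+1) > x0 \<and> c*(3*ln(x+1)) powr (-k) \<le> 1 \<and> x \<ge> 1) at_top"
  using assms by (intro eventually_conj; real_asymp)

lemma decay:
  fixes e :: "nat \<Rightarrow> real" and c k x0 :: real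
  assumes c: "c > 0" and k: "k > 0"
    and bnd: "\<And>n. 0 \<le> e n \<and> e n \<le> 1"
    and rec: "\<And>n M. n \<ge> 1 \<Longrightarrow> M > x0 \<Longrightarrow> e (Suc n) \<le> exp (-M) + (1 - c * M powr (-k)) * e n"
  shows "\<exists>\<kappa>>0. \<forall>t\<ge>1. e t \<le> \<kappa> * real t powr (-21/10)"
proof -
  have "eventually (\<lambda>n::nat. exp(-3*ln(real n+1)) + (1 - c*(3*ln(real n+1)) powr (-k)) * real n powr (-21/10) \<le> (real n+1) powr (-21/10)
     \<and> 3*ln(real n+1) > x0 \<and> c*(3*ln(real n+1)) powr (-k) \<le> 1 \<and> real n \<ge> 1) sequentially"
    by (rule eventually_compose_filterlim[OF ev_real[OF c k] filterlim_real_sequentially])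
  then obtain N where N: "\<And>n. n \<ge> N \<Longrightarrow> exp(-3*ln(real n+1)) + (1 - c*(3*ln(real n+1)) powr (-k)) * real n powr (-21/10) \<le> (real n+1) powr (-21/10)
     \<and> 3*ln(real n+1) > x0 \<and> c*(3*ln(real n+1)) powr (-k) \<le> 1 \<and> real n \<ge> 1"
    unfolding eventually_sequentially by blast
  define A where "A = max 1 (real (N+1) powr (21/10))"
  have A1: "A \<ge> 1" unfolding A_def by simp
  have small: "e t \<le> A * real t powr (-21/10)" if "t \<ge> 1" "t \<le> N + 1" for t
  proof -
    have "real t powr (21/10) \<le> real (N+1) powr (21/10)"
      using that by (intro powr_mono2) auto
    then have "real t powr (21/10) \<le> A" unfolding A_def by simp
    then have "1 \<le> A * real t powr (-21/10)"
      using that by (simp add: powr_minus field_simps)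
    then show ?thesis using bnd[of t] by linarith
  qed
  have main: "e t \<le> A * real t powr (-21/10)" if "t \<ge> 1" for t
    using that
  proof (induction t rule: nat_induct_at_least)
    case base then show ?case using small[of 1] by simp
  next
    case (Suc n)
    show ?case
    proof (cases "Suc n \<le> N + 1")
      case True then show ?thesis using small[of "Suc n"] by simp
    next
      case False
      then have nN: "n \<ge> N" by simp
      define M where "M = 3*ln(real n+1)"
      have P: "exp(-M) + (1 - c*M powr (-k)) * real n powr (-21/10) \<le> (real n+1) powr (-21/10)"
        "M > x0" "c*M powr (-k) \<le> 1" using N[OF nN] unfolding M_def by auto
      have "e (Suc n) \<le> exp (-M) + (1 - c*M powr (-k)) * e n" using rec[OF Suc.hyps P(2)] .
      also have "\<dots> \<le> exp (-M) + (1 - c*M powr (-k)) * (A * real n powr (-21/10))"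
        using P(3) Suc.IH by (intro add_left_mono mult_left_mono) auto
      also have "\<dots> \<le> A * exp (-M) + (1 - c*M powr (-k)) * (A * real n powr (-21/10))"
        using A1 by (intro add_right_mono) auto
      also have "\<dots> = A * (exp(-M) + (1 - c*M powr (-k)) * real n powr (-21/10))"
        by (simp add: algebra_simps)
      also have "\<dots> \<le> A * (real n+1) powr (-21/10)"
        using P(1) A1 by (intro mult_left_mono) auto
      finally show ?thesis by (simp add: add.commute)
    qed
  qed
  show ?thesis using main A1 by (intro exI[of _ A]) auto
qed

theorem proposition2:
  fixes Fp Fm :: "real measure" and c k x0 :: real
  defines "L \<equiv> llr Fp Fm"
  defines "Gp \<equiv> llr_cdf Fp L"
  defines "Gm \<equiv> llr_cdf Fm L"
  assumes "prob_space Fp" and "prob_space Fm"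
    and "sets Fp = sets borel" and "sets Fm = sets borel"
    and "absolutely_continuous Fp Fm" and "absolutely_continuous Fm Fp"
    and unbounded: "\<forall>M::real.
       (measure Fp {s \<in> space Fp. L s > M} + measure Fm {s \<in> space Fm. L s > M}) / 2 > 0 \<and>
       (measure Fp {s \<in> space Fp. L s < - M} + measure Fm {s \<in> space Fm. L s < - M}) / 2 > 0"
    and "c > 0" and "k > 0" and "x0 > 0"
    and tails: "\<forall>x > x0. Gm (- x) = c * x powr (- k) \<and> Gp x = 1 - c * x powr (- k)"
  shows "\<exists>\<kappa> > 0. \<forall>t::nat \<ge> 1.
    measure (PiM UNIV (\<lambda>_::nat. Fp)) {w \<in> space (PiM UNIV (\<lambda>_::nat. Fp)). action L Gp Gm w t = -1}
      < \<kappa> * real t powr (- 2.1)"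
proof -
  note A = assms[unfolded L_def Gp_def Gm_def]
  interpret SL2 Fp Fm c k x0
    by (intro SL2.intro SL.intro SL2_axioms.intro A)
  have Lm: "llr Fp Fm \<in> borel_measurable borel"
  proof -
    have "borel_measurable Fp = borel_measurable borel" by (rule measurable_cong_sets) (simp_all add: sFp)
    then show ?thesis using L_meas_p by metis
  qed
  interpret pm: PM Fp "llr Fp Fm" "llr_cdf Fp (llr Fp Fm)" "llr_cdf Fm (llr Fp Fm)"
    by (intro PM.intro pFp sFp Lm Gp_eq)
  obtain \<kappa> where kp: "\<kappa> > 0" and kb: "\<And>t. t \<ge> 1 \<Longrightarrow> err t \<le> \<kappa> * real t powr (-21/10)"
  proof -
    have "\<exists>\<kappa>>0. \<forall>t\<ge>1. err t \<le> \<kappa> * real t powr (-21/10)"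
    proof (rule decay[of c k err x0, OF cpos kpos])
      show "0 \<le> err n \<and> err n \<le> 1" for n using err_bounds[of n] by simp
      show "err (Suc n) \<le> exp (-M) + (1 - c * M powr (-k)) * err n" if "n \<ge> 1" "M > x0" for n M
        by (rule err_rec[OF that])
    qed
    then show ?thesis using that by blast
  qed
  have act: "action L Gp Gm w t = -1 \<longleftrightarrow> \<not> hd (hist L Gp Gm w t)" if t1: "t \<ge> 1" for w t
  proof -
    obtain m where m: "t = Suc m" using t1 by (cases t) simp_all
    show ?thesis unfolding action_def m by (simp add: pub_hist)
  qed
  show ?thesis
  proof (intro exI[of _ "2 * \<kappa> + 1"] conjI allI impI)
    show "2 * \<kappa> + 1 > 0" using kp by simp
    fix t :: nat assume t: "t \<ge> 1"
    have "measure (PiM UNIV (\<lambda>_::nat. Fp)) {w \<in> space (PiM UNIV (\<lambda>_::nat. Fp)). action L Gp Gm w t = -1}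
        = measure (PiM UNIV (\<lambda>_::nat. Fp)) {w. \<not> hd (hist L Gp Gm w t)}"
      using act[OF t] by simp
    also have "\<dots> = (\<Sum>h\<in>HL t. if hd h then 0 else pp h)"
      unfolding L_def Gp_def Gm_def by (rule pm.wrong_prob[OF t])
    also have "\<dots> \<le> 2 * err t" by (rule wrong_le_err)
    also have "\<dots> \<le> 2 * (\<kappa> * real t powr (-21/10))" using kb[OF t] by simp
    also have "\<dots> < (2 * \<kappa> + 1) * real t powr (- 2.1)"
      using t by (simp add: algebra_simps)
    finally show "measure (PiM UNIV (\<lambda>_::nat. Fp)) {w \<in> space (PiM UNIV (\<lambda>_::nat. Fp)). action L Gp Gm w t = -1}
      < (2 * \<kappa> + 1) * real t powr (- 2.1)" .
  qed
qed

end
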